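(* If $G$ is a cubic (3-regular) graph, then $\mathrm{TC}_2(G)=3$ and $\mathrm{TC}_3(G)=2$.
   Context: All graphs are finite, simple and connected. $N(v)$ denotes the open neighborhood of $v$. For $\delta(G)\ge k$, a set $S\subseteq V(G)$ is a total $k$-dominating set if $|N(v)\cap S|\ge k$ for every $v\in V(G)$. Two disjoint sets $U,W\subseteq V(G)$ form a total $k$-coalition if neither is a total $k$-dominating set but $U\cup W$ is. A total $k$-coalition partition of $G$ is a partition $\Omega$ of $V(G)$ in which every set forms a total $k$-coalition with some other set of $\Omega$; $\mathrm{TC}_k(G)$ is the maximum cardinality of such a partition. *)

theory Defs
  imports Main
begin

definition simple_graph :: "'a set \<Rightarrow> ('a \<Rightarrow> 'a \<Rightarrow> bool) \<Rightarrow> bool" where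
  "simple_graph V E \<longleftrightarrow> finite V \<and> V \<noteq> {} \<and>
     (\<forall>x y. E x y \<longrightarrow> x \<in> V \<and> y \<in> V) \<and>
     (\<forall>x y. E x y \<longrightarrow> E y x) \<and> (\<forall>x. \<not> E x x)"

definition connected_graph :: "'a set \<Rightarrow> ('a \<Rightarrow> 'a \<Rightarrow> bool) \<Rightarrow> bool" where
  "connected_graph V E \<longleftrightarrow> simple_graph V E \<and> (\<forall>x\<in>V. \<forall>y\<in>V. E\<^sup>*\<^sup>* x y)"

definition nbhd :: "'a set \<Rightarrow> ('a \<Rightarrow> 'a \<Rightarrow> bool) \<Rightarrow> 'a \<Rightarrow> 'a set" where
  "nbhd V E v = {u \<in> V. E v u}"

definition cubic :: "'a set \<Rightarrow> ('a \<Rightarrow> 'a \<Rightarrow> bool) \<Rightarrow> bool" where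
  "cubic V E \<longleftrightarrow> (\<forall>v\<in>V. card (nbhd V E v) = 3)"

definition total_k_dominating :: "'a set \<Rightarrow> ('a \<Rightarrow> 'a \<Rightarrow> bool) \<Rightarrow> nat \<Rightarrow> 'a set \<Rightarrow> bool" where
  "total_k_dominating V E k S \<longleftrightarrow> S \<subseteq> V \<and> (\<forall>v\<in>V. card (nbhd V E v \<inter> S) \<ge> k)"

definition total_k_coalition :: "'a set \<Rightarrow> ('a \<Rightarrow> 'a \<Rightarrow> bool) \<Rightarrow> nat \<Rightarrow> 'a set \<Rightarrow> 'a set \<Rightarrow> bool" where
  "total_k_coalition V E k U W \<longleftrightarrow> U \<inter> W = {} \<and>
     \<not> total_k_dominating V E k U \<and> \<not> total_k_dominating V E k W \<and>
     total_k_dominating V E k (U \<union> W)"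

definition is_partition :: "'a set \<Rightarrow> 'a set set \<Rightarrow> bool" where
  "is_partition V P \<longleftrightarrow> (\<forall>A\<in>P. A \<noteq> {}) \<and> \<Union>P = V \<and>
     (\<forall>A\<in>P. \<forall>B\<in>P. A \<noteq> B \<longrightarrow> A \<inter> B = {})"

definition total_k_coalition_partition :: "'a set \<Rightarrow> ('a \<Rightarrow> 'a \<Rightarrow> bool) \<Rightarrow> nat \<Rightarrow> 'a set set \<Rightarrow> bool" where
  "total_k_coalition_partition V E k P \<longleftrightarrow> is_partition V P \<and>
     (\<forall>A\<in>P. \<exists>B\<in>P. B \<noteq> A \<and> total_k_coalition V E k A B)"

definition TC :: "'a set \<Rightarrow> ('a \<Rightarrow> 'a \<Rightarrow> bool) \<Rightarrow> nat \<Rightarrow> nat" where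
  "TC V E k = Max {card P | P. total_k_coalition_partition V E k P}"

end

theory Submission
  imports Defs
begin

lemma nb_fin: "simple_graph V E \<Longrightarrow> finite (nbhd V E v)"
  unfolding simple_graph_def nbhd_def by auto

lemma card_split: "finite N \<Longrightarrow> X \<inter> Y = {} \<Longrightarrow> card (N \<inter> (X \<union> Y)) = card (N \<inter> X) + card (N \<inter> Y)"
  by (metis Int_Un_distrib card_Un_disjoint disjoint_iff finite_Int inf.cobounded1 IntD2 rev_finite_subset)

lemma two_dom_disj:
  assumes sg: "simple_graph V E" and cu: "cubic V E" and d: "X \<inter> Y = {}"
    and x: "total_k_dominating V E 2 X" and y: "total_k_dominating V E 2 Y"
  shows False
proof -
  obtain v where v: "v \<in> V" using sg unfolding simple_graph_def by auto
  let ?N = "nbhd V E v"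
  have f: "finite ?N" using nb_fin[OF sg] .
  have "card (?N \<inter> (X \<union> Y)) = card (?N \<inter> X) + card (?N \<inter> Y)" using card_split[OF f d] .
  moreover have "card (?N \<inter> (X \<union> Y)) \<le> card ?N" using f by (simp add: card_mono)
  moreover have "card ?N = 3" using cu v unfolding cubic_def by auto
  moreover have "card (?N \<inter> X) \<ge> 2" "card (?N \<inter> Y) \<ge> 2" using x y v unfolding total_k_dominating_def by auto
  ultimately show False by linarith
qed

lemma final4:
  assumes sg: "simple_graph V E" and cu: "cubic V E"
    and d: "X \<inter> Y = {}" "X \<inter> C = {}" "X \<inter> C' = {}" "Y \<inter> C = {}" "Y \<inter> C' = {}" "C \<inter> C' = {}"
    and nx: "\<not> total_k_dominating V E 2 X"
    and xy: "total_k_dominating V E 2 (X \<union> Y)"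
    and xc: "total_k_dominating V E 2 (X \<union> C)"
    and xc': "total_k_dominating V E 2 (X \<union> C')"
  shows False
proof -
  have sub: "X \<subseteq> V" using xy unfolding total_k_dominating_def by auto
  obtain v where v: "v \<in> V" and lt: "card (nbhd V E v \<inter> X) < 2"
    using nx sub unfolding total_k_dominating_def by force
  let ?N = "nbhd V E v"
  have f: "finite ?N" using nb_fin[OF sg] .
  have e1: "card (?N \<inter> (X \<union> Y)) = card (?N \<inter> X) + card (?N \<inter> Y)" using card_split[OF f d(1)] .
  have e2: "card (?N \<inter> (X \<union> C)) = card (?N \<inter> X) + card (?N \<inter> C)" using card_split[OF f d(2)] .
  have e3: "card (?N \<inter> (X \<union> C')) = card (?N \<inter> X) + card (?N \<inter> C')" using card_split[OF f d(3)] .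
  have d4: "(X \<union> Y) \<inter> (C \<union> C') = {}" using d by blast
  have e4: "card (?N \<inter> ((X \<union> Y) \<union> (C \<union> C'))) = card (?N \<inter> (X \<union> Y)) + card (?N \<inter> (C \<union> C'))"
    using card_split[OF f d4] .
  have e5: "card (?N \<inter> (C \<union> C')) = card (?N \<inter> C) + card (?N \<inter> C')" using card_split[OF f d(6)] .
  have "card (?N \<inter> ((X \<union> Y) \<union> (C \<union> C'))) \<le> card ?N" using f by (simp add: card_mono)
  moreover have "card ?N = 3" using cu v unfolding cubic_def by auto
  moreover have "card (?N \<inter> (X \<union> Y)) \<ge> 2" "card (?N \<inter> (X \<union> C)) \<ge> 2" "card (?N \<inter> (X \<union> C')) \<ge> 2"
    using xy xc xc' v unfolding total_k_dominating_def by auto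
  ultimately show False using e1 e2 e3 e4 e5 lt by linarith
qed

lemma tc2_bound:
  assumes sg: "simple_graph V E" and cu: "cubic V E"
    and P: "total_k_coalition_partition V E 2 P"
  shows "card P \<le> 3"
proof (cases "P = {}")
  case True then show ?thesis by simp
next
  case False
  have ip: "is_partition V P" and co: "\<forall>A\<in>P. \<exists>B\<in>P. B \<noteq> A \<and> total_k_coalition V E 2 A B"
    using P unfolding total_k_coalition_partition_def by auto
  have dis: "\<And>A B. A \<in> P \<Longrightarrow> B \<in> P \<Longrightarrow> A \<noteq> B \<Longrightarrow> A \<inter> B = {}" using ip unfolding is_partition_def by auto
  have "finite (\<Union>P)" using ip sg unfolding is_partition_def simple_graph_def by simp
  hence finP: "finite P" by (rule finite_UnionD)
  obtain A where A: "A \<in> P" using False by auto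
  obtain B where B: "B \<in> P" "B \<noteq> A" "total_k_coalition V E 2 A B" using co A by blast
  have ab: "total_k_dominating V E 2 (A \<union> B)" using B(3) unfolding total_k_coalition_def by auto
  have claim: "C = C'" if C: "C \<in> P - {A,B}" and C': "C' \<in> P - {A,B}" for C C'
  proof (rule ccontr)
    assume ne: "C \<noteq> C'"
    have CP: "C \<in> P" "C \<noteq> A" "C \<noteq> B" using C by auto
    have CP': "C' \<in> P" "C' \<noteq> A" "C' \<noteq> B" using C' by auto
    obtain D where D: "D \<in> P" "D \<noteq> C" "total_k_coalition V E 2 C D" using co CP(1) by blast
    obtain D' where D': "D' \<in> P" "D' \<noteq> C'" "total_k_coalition V E 2 C' D'" using co CP'(1) by blast
    have cd: "total_k_dominating V E 2 (C \<union> D)" "\<not> total_k_dominating V E 2 D"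
      using D(3) unfolding total_k_coalition_def by auto
    have cd': "total_k_dominating V E 2 (C' \<union> D')" "\<not> total_k_dominating V E 2 D'"
      using D'(3) unfolding total_k_coalition_def by auto
    have AB: "A \<inter> B = {}" using dis[OF A B(1)] B(2) by auto
    have AC: "A \<inter> C = {}" using dis[OF A CP(1)] CP(2) by auto
    have BC: "B \<inter> C = {}" using dis[OF B(1) CP(1)] CP(3) by auto
    have AC': "A \<inter> C' = {}" using dis[OF A CP'(1)] CP'(2) by auto
    have BC': "B \<inter> C' = {}" using dis[OF B(1) CP'(1)] CP'(3) by auto
    have CC': "C \<inter> C' = {}" using dis[OF CP(1) CP'(1)] ne by auto
    have DAB: "D = A \<or> D = B"
    proof (rule ccontr)
      assume nd: "\<not> (D = A \<or> D = B)"
      have "A \<inter> D = {}" using dis[OF A D(1)] nd by auto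
      moreover have "B \<inter> D = {}" using dis[OF B(1) D(1)] nd by auto
      ultimately have "(A \<union> B) \<inter> (C \<union> D) = {}" using AC BC by blast
      thus False using two_dom_disj[OF sg cu _ ab cd(1)] by blast
    qed
    have DAB': "D' = A \<or> D' = B"
    proof (rule ccontr)
      assume nd: "\<not> (D' = A \<or> D' = B)"
      have "A \<inter> D' = {}" using dis[OF A D'(1)] nd by auto
      moreover have "B \<inter> D' = {}" using dis[OF B(1) D'(1)] nd by auto
      ultimately have "(A \<union> B) \<inter> (C' \<union> D') = {}" using AC' BC' by blast
      thus False using two_dom_disj[OF sg cu _ ab cd'(1)] by blast
    qed
    have DD: "D = D'"
    proof (rule ccontr)
      assume nd: "D \<noteq> D'"
      have "(A \<inter> B = {}) \<Longrightarrow> (C \<union> D) \<inter> (C' \<union> D') = {}"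
        using DAB DAB' nd AC BC AC' BC' CC' by (elim disjE) (simp_all add: Int_commute Int_Un_distrib Int_Un_distrib2)
      thus False using AB two_dom_disj[OF sg cu _ cd(1) cd'(1)] by blast
    qed
    show False
    proof (cases "D = A")
      case True
      have "total_k_dominating V E 2 (A \<union> C')" using cd'(1) DD True by (simp add: Un_commute)
      moreover have "total_k_dominating V E 2 (A \<union> C)" using cd(1) True by (simp add: Un_commute)
      ultimately show False
        using final4[OF sg cu AB AC AC' BC BC' CC'] cd(2) True ab by blast
    next
      case False
      hence DB: "D = B" using DAB by auto
      have "total_k_dominating V E 2 (B \<union> C')" using cd'(1) DD DB by (simp add: Un_commute)
      moreover have "total_k_dominating V E 2 (B \<union> C)" using cd(1) DB by (simp add: Un_commute)
      moreover have "total_k_dominating V E 2 (B \<union> A)" using ab by (simp add: Un_commute)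
      moreover have "B \<inter> A = {}" using AB by blast
      ultimately show False
        using final4[OF sg cu _ BC BC' AC AC' CC'] cd(2) DB by blast
    qed
  qed
  have c0: "\<forall>a\<in>P-{A,B}. \<forall>b\<in>P-{A,B}. a = b" using claim by blast
  have c1: "card (P - {A,B}) \<le> 1" using c0 finP by (metis One_nat_def card_le_Suc0_iff_eq finite_Diff)
  have "P \<subseteq> {A,B} \<union> (P - {A,B})" by auto
  hence "card P \<le> card ({A,B} \<union> (P - {A,B}))" using finP by (intro card_mono) auto
  also have "\<dots> \<le> card {A,B} + card (P - {A,B})" by (rule card_Un_le)
  also have "\<dots> \<le> 3" using c1 B(2) by simp
  finally show ?thesis .
qed


lemma nb_sub: "nbhd V E v \<subseteq> V" unfolding nbhd_def by auto

lemma card3: "cubic V E \<Longrightarrow> v \<in> V \<Longrightarrow> card (nbhd V E v) = 3" unfolding cubic_def by auto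

lemma single_not: assumes "k \<ge> 2" "v \<in> V" "cubic V E" "simple_graph V E"
  shows "\<not> total_k_dominating V E k {x}"
proof
  assume "total_k_dominating V E k {x}"
  hence "card (nbhd V E v \<inter> {x}) \<ge> k" using assms(2) unfolding total_k_dominating_def by auto
  moreover have "card (nbhd V E v \<inter> {x}) \<le> 1" by (rule order_trans[OF card_mono[of "{x}"]]) auto
  ultimately show False using assms(1) by linarith
qed

lemma minus_one_dom: assumes sg: "simple_graph V E" and cu: "cubic V E"
  shows "total_k_dominating V E 2 (V - {y})"
  unfolding total_k_dominating_def
proof (intro conjI ballI)
  fix u assume u: "u \<in> V"
  have "nbhd V E u \<inter> (V - {y}) = nbhd V E u - {y}" using nb_sub[of V E u] by blast
  moreover have "card (nbhd V E u) - card {y} \<le> card (nbhd V E u - {y})" by (rule diff_card_le_card_Diff) simp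
  ultimately show "2 \<le> card (nbhd V E u \<inter> (V - {y}))" using card3[OF cu u] by simp
qed auto

lemma TC_eq: assumes "\<And>P. total_k_coalition_partition V E k P \<Longrightarrow> card P \<le> n"
  and "total_k_coalition_partition V E k P0" and "card P0 = n"
  shows "TC V E k = n"
  unfolding TC_def
proof (rule Max_eqI)
  show "finite {card P |P. total_k_coalition_partition V E k P}"
    by (rule finite_subset[of _ "{..n}"]) (auto dest: assms(1))
  show "n \<in> {card P |P. total_k_coalition_partition V E k P}" using assms(2,3) by auto
qed (auto dest: assms(1))

lemma tc3_bound:
  assumes sg: "simple_graph V E" and cu: "cubic V E"
    and P: "total_k_coalition_partition V E 3 P"
  shows "card P \<le> 2"
proof (cases "P = {}")
  case True then show ?thesis by simp
next
  case False
  have ip: "is_partition V P" and co: "\<forall>A\<in>P. \<exists>B\<in>P. B \<noteq> A \<and> total_k_coalition V E 3 A B"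
    using P unfolding total_k_coalition_partition_def by auto
  have dis: "\<And>A B. A \<in> P \<Longrightarrow> B \<in> P \<Longrightarrow> A \<noteq> B \<Longrightarrow> A \<inter> B = {}" using ip unfolding is_partition_def by auto
  have ne: "\<And>A. A \<in> P \<Longrightarrow> A \<noteq> {}" and sub: "\<And>A. A \<in> P \<Longrightarrow> A \<subseteq> V"
    using ip unfolding is_partition_def by auto
  obtain A where A: "A \<in> P" using False by auto
  obtain B where B: "B \<in> P" "B \<noteq> A" "total_k_coalition V E 3 A B" using co A by blast
  have ab: "total_k_dominating V E 3 (A \<union> B)" using B(3) unfolding total_k_coalition_def by auto
  have VAB: "V \<subseteq> A \<union> B"
  proof
    fix u assume u: "u \<in> V"
    have "card (nbhd V E u) = 3" using card3[OF cu u] .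
    hence "nbhd V E u \<noteq> {}" by auto
    then obtain w where w: "w \<in> nbhd V E u" by auto
    hence wV: "w \<in> V" and "E u w" unfolding nbhd_def by auto
    hence "E w u" using sg unfolding simple_graph_def by auto
    hence uw: "u \<in> nbhd V E w" using u unfolding nbhd_def by auto
    have f: "finite (nbhd V E w)" using nb_fin[OF sg] .
    have "card (nbhd V E w \<inter> (A \<union> B)) \<ge> 3" using ab wV unfolding total_k_dominating_def by auto
    hence "card (nbhd V E w) \<le> card (nbhd V E w \<inter> (A \<union> B))" using card3[OF cu wV] by simp
    hence "nbhd V E w \<inter> (A \<union> B) = nbhd V E w" using f by (intro card_seteq) auto
    thus "u \<in> A \<union> B" using uw by blast
  qed
  have "P \<subseteq> {A,B}"
  proof
    fix C assume C: "C \<in> P"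
    show "C \<in> {A,B}"
    proof (rule ccontr)
      assume nC: "C \<notin> {A,B}"
      have "A \<inter> C = {}" using dis[OF A C] nC by auto
      moreover have "B \<inter> C = {}" using dis[OF B(1) C] nC by auto
      ultimately have "C = {}" using sub[OF C] VAB by blast
      thus False using ne[OF C] by simp
    qed
  qed
  hence "card P \<le> card {A,B}" by (intro card_mono) auto
  also have "\<dots> \<le> 2" by (simp add: card_insert_if)
  finally show ?thesis .
qed

theorem theorem3p6:
  fixes V :: "'a set" and E :: "'a \<Rightarrow> 'a \<Rightarrow> bool"
  assumes "connected_graph V E" and "cubic V E"
  shows "TC V E 2 = 3 \<and> TC V E 3 = 2"
proof -
  have sg: "simple_graph V E" using assms(1) unfolding connected_graph_def by auto
  note cu = assms(2)
  obtain v where v: "v \<in> V" using sg unfolding simple_graph_def by auto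
  have c3: "card (nbhd V E v) = 3" using card3[OF cu v] .
  then obtain x y z where xyz: "nbhd V E v = {x,y,z}" "x \<noteq> y" "x \<noteq> z" "y \<noteq> z"
    by (metis card_3_iff)
  have xV: "x \<in> V" and yV: "y \<in> V" and Evx: "E v x" and Evy: "E v y"
    using xyz(1) unfolding nbhd_def by blast+
  have vx: "v \<noteq> x" "v \<noteq> y" using Evx Evy sg unfolding simple_graph_def by auto
  have "TC V E 2 = 3"
  proof (rule TC_eq[OF tc2_bound[OF sg cu]])
    let ?R = "V - {x,y}"
    have Rne: "?R \<noteq> {}" using v vx by auto
    have Rnot: "\<not> total_k_dominating V E 2 ?R"
    proof
      assume "total_k_dominating V E 2 ?R"
      hence "card (nbhd V E v \<inter> ?R) \<ge> 2" using v unfolding total_k_dominating_def by auto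
      moreover have "nbhd V E v \<inter> ?R = {z}" using xyz nb_sub[of V E v] by auto
      ultimately show False by simp
    qed
    have xnot: "\<not> total_k_dominating V E 2 {x}" and ynot: "\<not> total_k_dominating V E 2 {y}"
      using single_not[OF _ v cu sg] by auto
    have u1: "{x} \<union> ?R = V - {y}" using xV xyz(2) by auto
    have u2: "{y} \<union> ?R = V - {x}" using yV xyz(2) by auto
    have c1: "total_k_coalition V E 2 {x} ?R" unfolding total_k_coalition_def
      using xnot Rnot u1 minus_one_dom[OF sg cu, of y] by auto
    have c2: "total_k_coalition V E 2 {y} ?R" unfolding total_k_coalition_def
      using ynot Rnot u2 minus_one_dom[OF sg cu, of x] by auto
    have c3': "total_k_coalition V E 2 ?R {x}" using c1 unfolding total_k_coalition_def
      by (auto simp: Un_commute)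
    have nR: "{x} \<noteq> ?R" "{y} \<noteq> ?R" by auto
    show "total_k_coalition_partition V E 2 {{x},{y},?R}"
      unfolding total_k_coalition_partition_def is_partition_def
      using Rne xV yV xyz(2) c1 c2 c3' nR by auto
    show "card {{x},{y},?R} = 3" using xyz(2) nR by (simp add: card_insert_if)
  qed
  moreover have "TC V E 3 = 2"
  proof (rule TC_eq[OF tc3_bound[OF sg cu]])
    let ?R = "V - {x}"
    have Rne: "?R \<noteq> {}" using v vx by auto
    have Rnot: "\<not> total_k_dominating V E 3 ?R"
    proof
      assume "total_k_dominating V E 3 ?R"
      hence "card (nbhd V E v \<inter> ?R) \<ge> 3" using v unfolding total_k_dominating_def by auto
      moreover have "nbhd V E v \<inter> ?R = {y,z}" using xyz nb_sub[of V E v] by auto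
      ultimately show False using xyz by simp
    qed
    have xnot: "\<not> total_k_dominating V E 3 {x}"
      using single_not[OF _ v cu sg] by auto
    have u1: "{x} \<union> ?R = V" using xV by auto
    have Vdom: "total_k_dominating V E 3 V" unfolding total_k_dominating_def
      using card3[OF cu] nb_sub[of V E] by (simp add: Int_absorb2)
    have c1: "total_k_coalition V E 3 {x} ?R" unfolding total_k_coalition_def
      using xnot Rnot u1 Vdom by auto
    have c3': "total_k_coalition V E 3 ?R {x}" using c1 unfolding total_k_coalition_def
      by (auto simp: Un_commute)
    have nR: "{x} \<noteq> ?R" by auto
    show "total_k_coalition_partition V E 3 {{x},?R}"
      unfolding total_k_coalition_partition_def is_partition_def
      using Rne xV c1 c3' nR by auto
    show "card {{x},?R} = 2" using nR by simp
  qed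
  ultimately show ?thesis by simp
qed

end
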